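(* Let $(\Gamma,\gamma)$ be a connected spin network which is not a trivial component, and let $e_0$ be a bridge of $\Gamma$ (an edge whose removal disconnects the graph). If $\gamma(e_0)\neq 0$ then $\langle\Gamma,\gamma\rangle^P=0$.
   Context: A cubic ribbon graph $\Gamma=(G,R)$: $G$ a finite graph with all vertices of degree $3$ (multiple edges and loops allowed, a loop counting $2$; a trivial component is a single edge closing on itself with no vertex), $R$ a cyclic ordering of half-edges at each vertex, determining an embedding in a closed orientable surface. A decoration $\gamma:E(G)\to\{0,1,\dots\}$ is admissible if at each vertex with incident decorations $a,b,c$ (loop counted twice) $a+b+c$ is even and $|a-b|\le c\le a+b$; a spin network is $(\Gamma,\gamma)$ with $\gamma$ admissible. Penrose evaluation: replace each edge $e$ by $\gamma(e)$ parallel strands on the thickened embedded graph; at each vertex join strands without crossings, $\frac{a+b-c}{2}$ between the $a$- and $b$-edges, $\frac{a+c-b}{2}$ between $a,c$, $\frac{b+c-a}{2}$ between $b,c$; insert a permutation $\sigma_e\in\mathfrak S_{\gamma(e)}$ on each edge; $\langle\Gamma,\gamma\rangle^P=\sum_{\vec\sigma}(\prod_e\mathrm{sign}\,\sigma_e)(-2)^{N(\vec\sigma)}$, with $N(\vec\sigma)$ the number of resulting closed curves. *)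

theory Defs
  imports "HOL-Combinatorics.Permutations"
begin

text \<open>Combinatorial model of a cubic ribbon graph (without trivial components):
  a finite set H of half-edges (darts), a rotation s whose orbits (all of size 3)
  are the vertices, with cyclic order h, s h, s (s h) around the vertex, and a
  fixed-point-free involution i whose orbits are the edges.  Loops and multiple
  edges are allowed automatically.\<close>

definition cubic_ribbon :: "nat set \<Rightarrow> (nat \<Rightarrow> nat) \<Rightarrow> (nat \<Rightarrow> nat) \<Rightarrow> bool" where
  "cubic_ribbon H s i \<longleftrightarrow> finite H \<and> s permutes H \<and> i permutes H \<and>
     (\<forall>h\<in>H. i (i h) = h \<and> i h \<noteq> h \<and> s h \<noteq> h \<and> s (s (s h)) = h)"

definition admissible :: "nat set \<Rightarrow> (nat \<Rightarrow> nat) \<Rightarrow> (nat \<Rightarrow> nat) \<Rightarrow> (nat \<Rightarrow> nat) \<Rightarrow> bool" where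
  "admissible H s i g \<longleftrightarrow> (\<forall>h\<in>H. g (i h) = g h) \<and>
     (\<forall>h\<in>H. let a = g h; b = g (s h); c = g (s (s h)) in
        even (a + b + c) \<and> \<bar>int a - int b\<bar> \<le> int c \<and> c \<le> a + b)"

definition spin_network :: "nat set \<Rightarrow> (nat \<Rightarrow> nat) \<Rightarrow> (nat \<Rightarrow> nat) \<Rightarrow> (nat \<Rightarrow> nat) \<Rightarrow> bool" where
  "spin_network H s i g \<longleftrightarrow> cubic_ribbon H s i \<and> admissible H s i g"

text \<open>Incidence relation on darts: same vertex, or two ends of an edge.  Removing the
  edge {h0, i h0} deletes the second kind of link for that edge only.\<close>

definition graph_rel :: "nat set \<Rightarrow> (nat \<Rightarrow> nat) \<Rightarrow> (nat \<Rightarrow> nat) \<Rightarrow> nat set \<Rightarrow> (nat \<times> nat) set" where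
  "graph_rel H s i E = {(h, s h) | h. h \<in> H} \<union> {(h, i h) | h. h \<in> H \<and> h \<in> E}"

definition connected_rg :: "nat set \<Rightarrow> (nat \<Rightarrow> nat) \<Rightarrow> (nat \<Rightarrow> nat) \<Rightarrow> bool" where
  "connected_rg H s i \<longleftrightarrow>
     (\<forall>x\<in>H. \<forall>y\<in>H. (x, y) \<in> (graph_rel H s i H \<union> (graph_rel H s i H)\<inverse>)\<^sup>*)"

definition is_bridge :: "nat set \<Rightarrow> (nat \<Rightarrow> nat) \<Rightarrow> (nat \<Rightarrow> nat) \<Rightarrow> nat \<Rightarrow> bool" where
  "is_bridge H s i h0 \<longleftrightarrow> h0 \<in> H \<and>
     (let E = H - {h0, i h0} in
      \<not> (\<forall>x\<in>H. \<forall>y\<in>H. (x, y) \<in> (graph_rel H s i E \<union> (graph_rel H s i E)\<inverse>)\<^sup>*))"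

text \<open>Strand endpoints: (h, j) with j < g h, numbered counterclockwise around the vertex
  of h.  At dart x the last k x strands are joined (nested, without crossings) to the
  first k x strands of s x, where k x = (g x + g (s x) - g (s (s x))) div 2.\<close>

definition strand_pts :: "nat set \<Rightarrow> (nat \<Rightarrow> nat) \<Rightarrow> (nat \<times> nat) set" where
  "strand_pts H g = (SIGMA h:H. {..<g h})"

definition vertex_match :: "nat set \<Rightarrow> (nat \<Rightarrow> nat) \<Rightarrow> (nat \<Rightarrow> nat) \<Rightarrow> ((nat \<times> nat) \<times> (nat \<times> nat)) set" where
  "vertex_match H s g = {((x, g x - 1 - j), (s x, j)) | x j. x \<in> H \<and>
      j < (g x + g (s x) - g (s (s x))) div 2}"

text \<open>The permutation p r of
  {..<g r} is inserted on the edge; with p r = id the strands run parallel, which in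
  the counterclockwise numbering at both ends joins (r, j) to (i r, g r - 1 - j).\<close>

definition edge_reps :: "nat set \<Rightarrow> (nat \<Rightarrow> nat) \<Rightarrow> nat set" where
  "edge_reps H i = {h \<in> H. h < i h}"

definition edge_match :: "nat set \<Rightarrow> (nat \<Rightarrow> nat) \<Rightarrow> (nat \<Rightarrow> nat) \<Rightarrow> (nat \<Rightarrow> nat \<Rightarrow> nat)
    \<Rightarrow> ((nat \<times> nat) \<times> (nat \<times> nat)) set" where
  "edge_match H i g p = {((r, j), (i r, g r - 1 - p r j)) | r j. r \<in> edge_reps H i \<and> j < g r}"

definition num_curves :: "nat set \<Rightarrow> (nat \<Rightarrow> nat) \<Rightarrow> (nat \<Rightarrow> nat) \<Rightarrow> (nat \<Rightarrow> nat)
    \<Rightarrow> (nat \<Rightarrow> nat \<Rightarrow> nat) \<Rightarrow> nat" where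
  "num_curves H s i g p =
     (let M = vertex_match H s g \<union> edge_match H i g p
      in card (strand_pts H g // Restr ((M \<union> M\<inverse>)\<^sup>*) (strand_pts H g)))"

definition penrose :: "nat set \<Rightarrow> (nat \<Rightarrow> nat) \<Rightarrow> (nat \<Rightarrow> nat) \<Rightarrow> (nat \<Rightarrow> nat) \<Rightarrow> int" where
  "penrose H s i g =
     (\<Sum>p \<in> Pi\<^sub>E (edge_reps H i) (\<lambda>r. {q. q permutes {..<g r}}).
        (\<Prod>r \<in> edge_reps H i. sign (p r)) * (-2) ^ num_curves H s i g p)"

end

theory Submission
  imports Defs
begin

definition kk :: "(nat\<Rightarrow>nat) \<Rightarrow> (nat\<Rightarrow>nat) \<Rightarrow> nat \<Rightarrow> nat" where
  "kk s g x = (g x + g (s x) - g (s (s x))) div 2"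
definition vf :: "(nat\<Rightarrow>nat) \<Rightarrow> (nat\<Rightarrow>nat) \<Rightarrow> nat \<times> nat \<Rightarrow> nat \<times> nat" where
  "vf s g q = (let x = fst q; m = snd q in
     if g x - kk s g x \<le> m then (s x, g x - 1 - m) else (s (s x), g (s (s x)) - 1 - m))"

lemma vf_props:
  assumes sn: "spin_network H s i g" and xH: "x \<in> H" and m: "m < g x"
  shows "vf s g (x,m) \<in> strand_pts H g \<and> vf s g (vf s g (x,m)) = (x,m) \<and> vf s g (x,m) \<noteq> (x,m)
     \<and> ((x,m), vf s g (x,m)) \<in> vertex_match H s g \<union> (vertex_match H s g)\<inverse>"
proof -
  have cr: "cubic_ribbon H s i" and ad: "admissible H s i g" using sn by (auto simp: spin_network_def)
  have sH: "\<And>h. h \<in> H \<Longrightarrow> s h \<in> H" using cr by (auto simp: cubic_ribbon_def permutes_in_image)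
  have s3: "\<And>h. h \<in> H \<Longrightarrow> s (s (s h)) = h" and sfix: "\<And>h. h \<in> H \<Longrightarrow> s h \<noteq> h"
    using cr by (auto simp: cubic_ribbon_def)
  define a where "a = g x" define b where "b = g (s x)" define c where "c = g (s (s x))"
  have adm: "even (a+b+c)" "\<bar>int a - int b\<bar> \<le> int c" "c \<le> a + b"
    using ad xH by (auto simp: admissible_def Let_def a_def b_def c_def)
  have k0: "kk s g x = (a+b-c) div 2" by (simp add: kk_def a_def b_def c_def)
  have k1: "kk s g (s x) = (b+c-a) div 2" by (simp add: kk_def a_def b_def c_def s3[OF xH])
  have k2: "kk s g (s (s x)) = (c+a-b) div 2" by (simp add: kk_def a_def b_def c_def s3[OF xH])
  have t: "a \<le> b + c" "b \<le> a + c" using adm(2) by linarith+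
  obtain t where tt: "a + b + c = 2 * t" using adm(1) by blast
  have q0: "a + b - c = 2 * (t - c)" using tt adm(3) by linarith
  have q1: "b + c - a = 2 * (t - a)" using tt t by linarith
  have q2: "c + a - b = 2 * (t - b)" using tt t by linarith
  have e1: "kk s g x + kk s g (s (s x)) = a" unfolding k0 k2 q0 q2 using tt t adm(3) by simp
  have e2: "kk s g x + kk s g (s x) = b" unfolding k0 k1 q0 q1 using tt t adm(3) by simp
  have e3: "kk s g (s x) + kk s g (s (s x)) = c" unfolding k1 k2 q1 q2 using tt t adm(3) by simp
  have ssx: "s (s x) \<noteq> x" using sfix[OF xH] s3[OF xH] by metis
  show ?thesis
  proof (cases "g x - kk s g x \<le> m")
    case True
    define j where "j = g x - 1 - m"
    have v: "vf s g (x,m) = (s x, j)" using True by (simp add: vf_def j_def)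
    have jk: "j < kk s g x" "m = g x - 1 - j" using True m e1 unfolding j_def a_def by auto
    have gk: "g (s x) - kk s g (s x) = kk s g x" using e2 unfolding b_def by linarith
    have vv: "vf s g (s x, j) = (x, m)"
      using jk gk e1 by (simp add: vf_def Let_def s3[OF xH] b_def a_def)
    have "((x, m), (s x, j)) \<in> vertex_match H s g"
      unfolding vertex_match_def using xH jk k0 by (auto simp: a_def b_def c_def)
    then show ?thesis using v vv jk e2 sH[OF xH] sfix[OF xH]
      by (auto simp: strand_pts_def b_def)
  next
    case False
    define j where "j = g (s (s x)) - 1 - m"
    have v: "vf s g (x,m) = (s (s x), j)" using False by (simp add: vf_def j_def)
    have mk: "m < kk s g (s (s x))" using False e1 m unfolding a_def by auto
    have jk: "m = c - 1 - j" "j < c" using mk e3 unfolding j_def c_def by auto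
    have cnd: "g (s (s x)) - kk s g (s (s x)) \<le> j" using mk e3 unfolding j_def c_def by linarith
    have vv: "vf s g (s (s x), j) = (x, m)"
      using jk cnd by (simp add: vf_def Let_def s3[OF xH] c_def j_def)
    have "((s (s x), j), (x, m)) \<in> vertex_match H s g"
      unfolding vertex_match_def using xH jk mk sH[OF sH[OF xH]] s3[OF xH]
      by (auto simp: c_def kk_def intro!: exI[of _ "s (s x)"] exI[of _ m])
    then show ?thesis using v vv jk sH[OF sH[OF xH]] ssx
      by (auto simp: strand_pts_def c_def)
  qed
qed


definition emR :: "nat set \<Rightarrow> (nat \<Rightarrow> nat) \<Rightarrow> (nat \<Rightarrow> nat) \<Rightarrow> (nat \<Rightarrow> nat \<Rightarrow> nat) \<Rightarrow> nat
    \<Rightarrow> ((nat \<times> nat) \<times> (nat \<times> nat)) set" where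
  "emR H i g p r0 = {((r, j), (i r, g r - 1 - p r j)) | r j. r \<in> edge_reps H i \<and> r \<noteq> r0 \<and> j < g r}"

definition ef :: "(nat \<Rightarrow> nat) \<Rightarrow> (nat \<Rightarrow> nat) \<Rightarrow> (nat \<Rightarrow> nat \<Rightarrow> nat) \<Rightarrow> nat \<times> nat \<Rightarrow> nat \<times> nat" where
  "ef i g p q = (let h = fst q; j = snd q in
     if h < i h then (i h, g h - 1 - p h j) else (i h, inv (p (i h)) (g (i h) - 1 - j)))"

lemma ef_props:
  assumes sn: "spin_network H s i g" and hH: "h \<in> H" and j: "j < g h"
    and hr: "h \<noteq> r0" "h \<noteq> i r0"
    and p: "p \<in> Pi\<^sub>E (edge_reps H i) (\<lambda>r. {q. q permutes {..<g r}})"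
  shows "ef i g p (h,j) \<in> strand_pts H g \<and> fst (ef i g p (h,j)) \<noteq> r0 \<and> fst (ef i g p (h,j)) \<noteq> i r0
     \<and> ef i g p (ef i g p (h,j)) = (h,j) \<and> ef i g p (h,j) \<noteq> (h,j)
     \<and> ((h,j), ef i g p (h,j)) \<in> emR H i g p r0 \<union> (emR H i g p r0)\<inverse>"
proof -
  have cr: "cubic_ribbon H s i" and ad: "admissible H s i g" using sn by (auto simp: spin_network_def)
  have iH: "\<And>h. h \<in> H \<Longrightarrow> i h \<in> H" using cr by (auto simp: cubic_ribbon_def permutes_in_image)
  have ii: "\<And>h. h \<in> H \<Longrightarrow> i (i h) = h" and ifix: "\<And>h. h \<in> H \<Longrightarrow> i h \<noteq> h"
    using cr by (auto simp: cubic_ribbon_def)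
  have gi: "\<And>h. h \<in> H \<Longrightarrow> g (i h) = g h" using ad by (auto simp: admissible_def)
  have pp: "\<And>r. r \<in> edge_reps H i \<Longrightarrow> p r permutes {..<g r}" using p by auto
  have ip: "i permutes H" using cr by (simp add: cubic_ribbon_def)
  have ne: "i h \<noteq> r0" "i h \<noteq> i r0" using hr ii[OF hH] apply metis
    using hr(1) permutes_inj[OF ip] by (metis injD)
  show ?thesis
  proof (cases "h < i h")
    case True
    have er: "h \<in> edge_reps H i" using True hH by (simp add: edge_reps_def)
    have pj: "p h j < g h" using permutes_in_image[OF pp[OF er]] j by simp
    have v: "ef i g p (h,j) = (i h, g h - 1 - p h j)" using True by (simp add: ef_def)
    have vv: "ef i g p (i h, g h - 1 - p h j) = (h, j)"
      using True pj ii[OF hH] gi[OF hH] permutes_inverses(2)[OF pp[OF er]]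
      by (simp add: ef_def Let_def)
    have "((h,j), (i h, g h - 1 - p h j)) \<in> emR H i g p r0"
      unfolding emR_def using er hr j by blast
    then show ?thesis using v vv ne iH[OF hH] gi[OF hH] pj ifix[OF hH]
      by (auto simp: strand_pts_def)
  next
    case False
    have lt: "i h < i (i h)" using False ifix[OF hH] ii[OF hH] by (metis linorder_neqE_nat)
    have er: "i h \<in> edge_reps H i" using lt iH[OF hH] by (simp add: edge_reps_def)
    define j' where "j' = inv (p (i h)) (g (i h) - 1 - j)"
    have arg: "g (i h) - 1 - j < g (i h)" using j gi[OF hH] by simp
    have j': "j' < g (i h)" unfolding j'_def
      using permutes_in_image[OF permutes_inv[OF pp[OF er]]] arg by simp
    have pj': "p (i h) j' = g (i h) - 1 - j" unfolding j'_def
      using permutes_inverses(1)[OF pp[OF er]] by simp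
    have v: "ef i g p (h,j) = (i h, j')" using False by (simp add: ef_def j'_def)
    have vv: "ef i g p (i h, j') = (h, j)"
      using lt ii[OF hH] pj' j gi[OF hH] by (simp add: ef_def Let_def)
    have "((i h, j'), (i (i h), g (i h) - 1 - p (i h) j')) \<in> emR H i g p r0"
      unfolding emR_def using er ne j' by blast
    then have "((i h, j'), (h, j)) \<in> emR H i g p r0" using pj' ii[OF hH] j gi[OF hH] by simp
    then show ?thesis using v vv ne iH[OF hH] j' ifix[OF hH]
      by (auto simp: strand_pts_def)
  qed
qed


lemma even_card_inv:
  assumes "finite C" "\<And>x. x\<in>C \<Longrightarrow> f x \<in> C \<and> f (f x) = x \<and> f x \<noteq> x"
  shows "even (card C)"
  using assms
proof (induction "card C" arbitrary: C rule: less_induct)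
  case less
  show ?case
  proof (cases "C = {}")
    case True then show ?thesis by simp
  next
    case False
    then obtain x where x: "x \<in> C" by blast
    let ?C = "C - {x, f x}"
    have fx: "f x \<in> C" "f x \<noteq> x" "f (f x) = x" using less.prems(2) x by auto
    have sub: "{x, f x} \<subseteq> C" using x fx by blast
    have c2: "card {x, f x} = 2" using fx by simp
    have cc: "card C = card ?C + 2"
      using card_Diff_subset[OF _ sub] card_mono[OF less.prems(1) sub] c2 by simp
    have "even (card ?C)"
    proof (rule less.hyps)
      show "card ?C < card C" using cc by simp
      show "finite ?C" using less.prems(1) by simp
      fix y assume y: "y \<in> ?C"
      then have a: "f y \<in> C \<and> f (f y) = y \<and> f y \<noteq> y" using less.prems(2) by auto
      have b: "f y \<noteq> x" proof assume "f y = x" then have "f x = y" using a by simp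
        then show False using y by simp qed
      have c: "f y \<noteq> f x" proof assume "f y = f x" then have "f (f y) = x" using fx by simp
        then show False using y a by simp qed
      show "f y \<in> ?C \<and> f (f y) = y \<and> f y \<noteq> y" using a b c by simp
    qed
    then show ?thesis using cc by simp
  qed
qed

lemma sym_rt: "(x, y) \<in> (R \<union> R\<inverse>)\<^sup>* \<Longrightarrow> (y, x) \<in> (R \<union> R\<inverse>)\<^sup>*"
proof -
  assume "(x, y) \<in> (R \<union> R\<inverse>)\<^sup>*"
  then have "(y, x) \<in> ((R \<union> R\<inverse>)\<inverse>)\<^sup>*" by (simp add: rtrancl_converse)
  moreover have "(R \<union> R\<inverse>)\<inverse> = R \<union> R\<inverse>" by auto
  ultimately show ?thesis by simp
qed

lemma partner:
  assumes sn: "spin_network H s i g" and con: "connected_rg H s i"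
    and br: "is_bridge H s i h0" and g0: "g h0 \<noteq> 0" and r0: "r0 = min h0 (i h0)"
    and p: "p \<in> Pi\<^sub>E (edge_reps H i) (\<lambda>r. {q. q permutes {..<g r}})"
  shows "\<exists>b. 0 < b \<and> b < g r0 \<and> ((r0,0),(r0,b)) \<in>
     ((vertex_match H s g \<union> emR H i g p r0) \<union> (vertex_match H s g \<union> emR H i g p r0)\<inverse>)\<^sup>*"
proof -
  have cr: "cubic_ribbon H s i" and ad: "admissible H s i g" using sn by (auto simp: spin_network_def)
  have fin: "finite H" and ip: "i permutes H" using cr by (auto simp: cubic_ribbon_def)
  have iH: "\<And>h. h \<in> H \<Longrightarrow> i h \<in> H" using cr by (auto simp: cubic_ribbon_def permutes_in_image)
  have sH: "\<And>h. h \<in> H \<Longrightarrow> s h \<in> H" using cr by (auto simp: cubic_ribbon_def permutes_in_image)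
  have ii: "\<And>h. h \<in> H \<Longrightarrow> i (i h) = h" and ifix: "\<And>h. h \<in> H \<Longrightarrow> i h \<noteq> h"
    using cr by (auto simp: cubic_ribbon_def)
  have gi: "\<And>h. h \<in> H \<Longrightarrow> g (i h) = g h" using ad by (auto simp: admissible_def)
  have h0H: "h0 \<in> H" using br by (simp add: is_bridge_def)
  have r0H: "r0 \<in> H" using r0 h0H iH by (simp add: min_def)
  have ir0H: "i r0 \<in> H" using iH r0H by simp
  have r0lt: "r0 < i r0" using r0 ifix[OF h0H] ii[OF h0H] by (simp add: min_def)
  have set0: "{h0, i h0} = {r0, i r0}" using r0 ii[OF h0H] by (auto simp: min_def)
  have gr0: "g r0 \<noteq> 0" using g0 gi[OF h0H] r0 by (simp add: min_def)
  have r0E: "r0 \<in> edge_reps H i" using r0H r0lt by (simp add: edge_reps_def)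
  have ir0E: "i r0 \<notin> edge_reps H i" using r0lt ii[OF r0H] by (simp add: edge_reps_def)
  define Rd where "Rd = graph_rel H s i (H - {h0, i h0})"
  define Sd where "Sd = Rd \<union> Rd\<inverse>"
  have notA: "(r0, i r0) \<notin> Sd\<^sup>*"
  proof
    assume a: "(r0, i r0) \<in> Sd\<^sup>*"
    let ?Rf = "graph_rel H s i H"
    have "?Rf \<union> ?Rf\<inverse> \<subseteq> Sd\<^sup>*"
    proof
      fix z assume z: "z \<in> ?Rf \<union> ?Rf\<inverse>"
      have one: "(x, y) \<in> Sd\<^sup>*" if xy: "(x, y) \<in> ?Rf" for x y
      proof -
        from xy consider (v) "x \<in> H" "y = s x" | (e) "x \<in> H" "y = i x"
          unfolding graph_rel_def by blast
        then show ?thesis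
        proof cases
          case v then have "(x, y) \<in> Rd" unfolding Rd_def graph_rel_def by blast
          then show ?thesis unfolding Sd_def by blast
        next
          case e
          show ?thesis
          proof (cases "x \<in> {h0, i h0}")
            case False
            then have "(x, y) \<in> Rd" using e unfolding Rd_def graph_rel_def by blast
            then show ?thesis unfolding Sd_def by blast
          next
            case True
            then have "x = r0 \<or> x = i r0" using set0 by blast
            then show ?thesis
            proof
              assume "x = r0" then show ?thesis using a e by simp
            next
              assume "x = i r0" then show ?thesis using a e ii[OF r0H] sym_rt[of r0 "i r0" Rd]
                unfolding Sd_def by simp
            qed
          qed
        qed
      qed
      from z show "z \<in> Sd\<^sup>*"
      proof
        assume "z \<in> ?Rf" then show ?thesis using one by (cases z) auto
      next
        assume "z \<in> ?Rf\<inverse>" then obtain x y where "z = (y, x)" "(x, y) \<in> ?Rf" by auto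
        then show ?thesis using one[of x y] sym_rt[of x y Rd] unfolding Sd_def by simp
      qed
    qed
    then have sub: "(?Rf \<union> ?Rf\<inverse>)\<^sup>* \<subseteq> Sd\<^sup>*" by (rule rtrancl_subset_rtrancl)
    have "\<forall>x\<in>H. \<forall>y\<in>H. (x, y) \<in> Sd\<^sup>*" using con sub unfolding connected_rg_def by blast
    then show False using br unfolding is_bridge_def Let_def Sd_def Rd_def by blast
  qed
  define M where "M = vertex_match H s g \<union> emR H i g p r0"
  define P where "P = strand_pts H g"
  have finP: "finite P" unfolding P_def strand_pts_def using fin by simp
  have link: "(fst q1, fst q2) \<in> Sd" if "(q1, q2) \<in> M \<union> M\<inverse>" for q1 q2
  proof -
    have l1: "(fst q1, fst q2) \<in> Rd" if "(q1, q2) \<in> M" for q1 q2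
    proof -
      from that consider (v) "(q1, q2) \<in> vertex_match H s g" | (e) "(q1, q2) \<in> emR H i g p r0"
        unfolding M_def by blast
      then show ?thesis
      proof cases
        case v then obtain x where "x \<in> H" "fst q1 = x" "fst q2 = s x"
          unfolding vertex_match_def by auto
        then show ?thesis unfolding Rd_def graph_rel_def by blast
      next
        case e then obtain r where r: "r \<in> edge_reps H i" "r \<noteq> r0" "fst q1 = r" "fst q2 = i r"
          unfolding emR_def by auto
        have "r \<noteq> i r0" using r ir0E by blast
        then have "r \<notin> {h0, i h0}" using set0 r by blast
        moreover have "r \<in> H" using r by (simp add: edge_reps_def)
        ultimately show ?thesis using r unfolding Rd_def graph_rel_def by blast
      qed
    qed
    from that show ?thesis unfolding Sd_def using l1[of q1 q2] l1[of q2 q1] by auto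
  qed
  define q0 where "q0 = (r0, 0::nat)"
  define C where "C = {q \<in> P. (q0, q) \<in> (M \<union> M\<inverse>)\<^sup>*}"
  have inA: "(r0, fst q) \<in> Sd\<^sup>*" if "(q0, q) \<in> (M \<union> M\<inverse>)\<^sup>*" for q
    using that
  proof (induction rule: rtrancl_induct)
    case base then show ?case by (simp add: q0_def)
  next
    case (step y z) then show ?case using link[of y z] by (meson rtrancl.rtrancl_into_rtrancl)
  qed
  have q0C: "q0 \<in> C" unfolding C_def P_def q0_def strand_pts_def using r0H gr0 by auto
  have finC: "finite C" using finP unfolding C_def by simp
  have evC: "even (card C)"
  proof (rule even_card_inv[OF finC, of "vf s g"])
    fix q assume q: "q \<in> C"
    obtain x m where xm: "q = (x, m)" "x \<in> H" "m < g x" using q unfolding C_def P_def strand_pts_def by auto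
    have v: "vf s g q \<in> P \<and> vf s g (vf s g q) = q \<and> vf s g q \<noteq> q \<and> (q, vf s g q) \<in> M \<union> M\<inverse>"
      using vf_props[OF sn xm(2,3)] xm(1) unfolding P_def M_def by auto
    have lk: "(q, vf s g q) \<in> M \<union> M\<inverse>" using v by (rule conjE) (elim conjE, assumption)
    have "(q0, q) \<in> (M \<union> M\<inverse>)\<^sup>*" using q unfolding C_def by simp
    then have "(q0, vf s g q) \<in> (M \<union> M\<inverse>)\<^sup>*"
      using lk by (rule rtrancl.rtrancl_into_rtrancl)
    then show "vf s g q \<in> C \<and> vf s g (vf s g q) = q \<and> vf s g q \<noteq> q" using v unfolding C_def by simp
  qed
  define D where "D = {q::nat\<times>nat. fst q \<noteq> r0 \<and> fst q \<noteq> i r0}"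
  have evCD: "even (card (C \<inter> D))"
  proof (rule even_card_inv[of _ "ef i g p"])
    show "finite (C \<inter> D)" using finC by simp
    fix q assume q: "q \<in> C \<inter> D"
    obtain x m where xm: "q = (x, m)" "x \<in> H" "m < g x" using q unfolding C_def P_def strand_pts_def by auto
    have xr: "x \<noteq> r0" "x \<noteq> i r0" using q xm unfolding D_def by auto
    have v: "ef i g p q \<in> P \<and> ef i g p q \<in> D \<and> ef i g p (ef i g p q) = q \<and> ef i g p q \<noteq> q \<and> (q, ef i g p q) \<in> M \<union> M\<inverse>"
      using ef_props[OF sn xm(2,3) xr p] xm(1) unfolding P_def M_def D_def by auto
    have lk: "(q, ef i g p q) \<in> M \<union> M\<inverse>" using v by (rule conjE) (elim conjE, assumption)
    have "(q0, q) \<in> (M \<union> M\<inverse>)\<^sup>*" using q unfolding C_def by simp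
    then have "(q0, ef i g p q) \<in> (M \<union> M\<inverse>)\<^sup>*"
      using lk by (rule rtrancl.rtrancl_into_rtrancl)
    then show "ef i g p q \<in> C \<inter> D \<and> ef i g p (ef i g p q) = q \<and> ef i g p q \<noteq> q" using v unfolding C_def by simp
  qed
  have cd: "card C = card (C \<inter> D) + card (C - D)"
    using finC by (rule card_Int_Diff)
  have oth: "\<exists>q \<in> C - D. q \<noteq> q0"
  proof (rule ccontr)
    assume "\<not> ?thesis"
    moreover have "q0 \<in> C - D" using q0C by (simp add: D_def q0_def)
    ultimately have "C - D = {q0}" by blast
    then show False using cd evC evCD by simp
  qed
  then obtain q where q: "q \<in> C" "q \<notin> D" "q \<noteq> q0" by blast
  have "fst q \<noteq> i r0" using inA[of q] q(1) notA unfolding C_def by auto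
  then have fq: "fst q = r0" using q(2) unfolding D_def by auto
  obtain b where qb: "q = (r0, b)" using fq by (cases q) auto
  have "b \<noteq> 0" using q(3) qb unfolding q0_def by simp
  moreover have "b < g r0" using q(1) qb unfolding C_def P_def strand_pts_def by auto
  moreover have "((r0,0),(r0,b)) \<in> (M \<union> M\<inverse>)\<^sup>*" using q(1) qb unfolding C_def q0_def by auto
  ultimately show ?thesis unfolding M_def by auto
qed


lemma edge_match_split:
  assumes "r0 \<in> edge_reps H i"
  shows "edge_match H i g p = emR H i g p r0 \<union> {((r0,j),(i r0, g r0 - 1 - p r0 j)) | j. j < g r0}"
  using assms unfolding edge_match_def emR_def by blast

lemma clos_L:
  fixes b G r0 x1 :: nat and f :: "nat \<Rightarrow> nat"
  assumes conn: "((r0,0),(r0,b)) \<in> (Mr \<union> Mr\<inverse>)\<^sup>*" and b: "0 < b" "b < G"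
  shows "{((r0,j),(x1, G - 1 - (f \<circ> Transposition.transpose 0 b) j)) | j. j < G}
     \<subseteq> ((Mr \<union> {((r0,j),(x1, G - 1 - f j)) | j. j < G}) \<union> (Mr \<union> {((r0,j),(x1, G - 1 - f j)) | j. j < G})\<inverse>)\<^sup>*"
  (is "?L' \<subseteq> (?M \<union> ?M\<inverse>)\<^sup>*")
proof
  fix z assume "z \<in> ?L'"
  then obtain j where z: "z = ((r0,j),(x1, G - 1 - (f \<circ> Transposition.transpose 0 b) j))" "j < G" by blast
  have sub: "(Mr \<union> Mr\<inverse>)\<^sup>* \<subseteq> (?M \<union> ?M\<inverse>)\<^sup>*" by (rule rtrancl_mono) blast
  have lk: "((r0,k),(x1, G - 1 - f k)) \<in> (?M \<union> ?M\<inverse>)\<^sup>*" if "k < G" for k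
    using that by blast
  have c1: "((r0,0),(r0,b)) \<in> (?M \<union> ?M\<inverse>)\<^sup>*" using conn sub by blast
  have c2: "((r0,b),(r0,0)) \<in> (?M \<union> ?M\<inverse>)\<^sup>*" using sym_rt[OF c1] .
  consider "j = 0" | "j = b" | "j \<noteq> 0" "j \<noteq> b" by blast
  then show "z \<in> (?M \<union> ?M\<inverse>)\<^sup>*"
  proof cases
    case 1
    have "((r0,b),(x1, G - 1 - f b)) \<in> (?M \<union> ?M\<inverse>)\<^sup>*" using b(2) by (rule lk)
    with c1 have "((r0,0),(x1, G - 1 - f b)) \<in> (?M \<union> ?M\<inverse>)\<^sup>*" by (rule rtrancl_trans)
    then show ?thesis using z 1 by simp
  next
    case 2
    have "0 < G" using b by simp
    then have "((r0,0),(x1, G - 1 - f 0)) \<in> (?M \<union> ?M\<inverse>)\<^sup>*" by (rule lk)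
    with c2 have "((r0,b),(x1, G - 1 - f 0)) \<in> (?M \<union> ?M\<inverse>)\<^sup>*" by (rule rtrancl_trans)
    then show ?thesis using z 2 by simp
  next
    case 3 then show ?thesis using z lk[of j] by simp
  qed
qed

lemma sym_sub: "R \<subseteq> (S \<union> S\<inverse>)\<^sup>* \<Longrightarrow> R \<union> R\<inverse> \<subseteq> (S \<union> S\<inverse>)\<^sup>*"
proof -
  assume a: "R \<subseteq> (S \<union> S\<inverse>)\<^sup>*"
  have "R\<inverse> \<subseteq> (S \<union> S\<inverse>)\<^sup>*"
  proof
    fix z assume "z \<in> R\<inverse>"
    then obtain x y where "z = (x, y)" "(y, x) \<in> R" by (cases z) auto
    then show "z \<in> (S \<union> S\<inverse>)\<^sup>*" using a sym_rt[of y x S] by auto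
  qed
  then show ?thesis using a by (rule Un_least[rotated])
qed



theorem lemma4:
  fixes H :: "nat set" and s i g :: "nat \<Rightarrow> nat" and h0 :: nat
  assumes "spin_network H s i g"
    and "connected_rg H s i"
    and "is_bridge H s i h0"
    and "g h0 \<noteq> 0"
  shows "penrose H s i g = 0"
proof -
  note sn = assms(1)
  have cr: "cubic_ribbon H s i" and ad: "admissible H s i g" using sn by (auto simp: spin_network_def)
  have iH: "\<And>h. h \<in> H \<Longrightarrow> i h \<in> H" using cr by (auto simp: cubic_ribbon_def permutes_in_image)
  have ii: "\<And>h. h \<in> H \<Longrightarrow> i (i h) = h" and ifix: "\<And>h. h \<in> H \<Longrightarrow> i h \<noteq> h"
    using cr by (auto simp: cubic_ribbon_def)
  have fin: "finite H" using cr by (simp add: cubic_ribbon_def)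
  define r0 where "r0 = min h0 (i h0)"
  have h0H: "h0 \<in> H" using assms(3) by (simp add: is_bridge_def)
  have r0H: "r0 \<in> H" using r0_def h0H iH by (simp add: min_def)
  have r0lt: "r0 < i r0" using r0_def ifix[OF h0H] ii[OF h0H] by (simp add: min_def)
  have r0E: "r0 \<in> edge_reps H i" using r0H r0lt by (simp add: edge_reps_def)
  have finE: "finite (edge_reps H i)" using fin by (simp add: edge_reps_def)
  define D where "D = Pi\<^sub>E (edge_reps H i) (\<lambda>r. {q. q permutes {..<g r}})"
  define Mr where "Mr = (\<lambda>p. vertex_match H s g \<union> emR H i g p r0)"
  define bs where "bs = (\<lambda>p. SOME b. 0 < b \<and> b < g r0 \<and> ((r0,0),(r0,b)) \<in> (Mr p \<union> (Mr p)\<inverse>)\<^sup>*)"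
  define phi where "phi = (\<lambda>p. p(r0 := p r0 \<circ> Transposition.transpose 0 (bs p)))"
  have bsP: "0 < bs p \<and> bs p < g r0 \<and> ((r0,0),(r0,bs p)) \<in> (Mr p \<union> (Mr p)\<inverse>)\<^sup>*" if "p \<in> D" for p
  proof -
    have "\<exists>b. 0 < b \<and> b < g r0 \<and> ((r0,0),(r0,b)) \<in> (Mr p \<union> (Mr p)\<inverse>)\<^sup>*"
      using partner[OF sn assms(2,3,4) r0_def, of p] that unfolding D_def Mr_def by blast
    then show ?thesis unfolding bs_def by (rule someI_ex)
  qed
  have phi_app: "phi q = q(r0 := q r0 \<circ> Transposition.transpose 0 (bs q))" for q
    by (simp add: phi_def)
  have emR_eq: "emR H i g (phi p) r0 = emR H i g p r0" for p
    unfolding emR_def phi_def by auto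
  have Mr_eq: "Mr (phi p) = Mr p" for p unfolding Mr_def using emR_eq by simp
  have bs_eq: "bs (phi p) = bs p" for p unfolding bs_def Mr_eq ..
  have phi_phi: "phi (phi p) = p" for p
  proof -
    have "phi (phi p) = (phi p)(r0 := (phi p) r0 \<circ> Transposition.transpose 0 (bs p))"
      using phi_app[of "phi p"] bs_eq by simp
    also have "\<dots> = p" unfolding phi_def by (auto simp: fun_eq_iff o_def)
    finally show ?thesis .
  qed
  have pr0: "p r0 permutes {..<g r0}" if "p \<in> D" for p using that r0E unfolding D_def by auto
  have tr: "Transposition.transpose 0 (bs p) permutes {..<g r0}" if "p \<in> D" for p
    using bsP[OF that] by (intro permutes_swap_id) auto
  have phiD: "phi p \<in> D" if "p \<in> D" for p
  proof -
    have "p r0 \<circ> Transposition.transpose 0 (bs p) permutes {..<g r0}"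
      using permutes_compose[OF tr[OF that] pr0[OF that]] .
    then show ?thesis using that r0E unfolding D_def phi_def by (auto simp: PiE_iff extensional_def)
  qed
  define F where "F = (\<lambda>p. (\<Prod>r \<in> edge_reps H i. sign (p r)) * (-2::int) ^ num_curves H s i g p)"
  have sgn: "(\<Prod>r \<in> edge_reps H i. sign (phi p r)) = - (\<Prod>r \<in> edge_reps H i. sign (p r))"
    if "p \<in> D" for p
  proof -
    have pm1: "permutation (p r0)" using permutes_imp_permutation[OF _ pr0[OF that]] by simp
    have pm2: "permutation (Transposition.transpose 0 (bs p))"
      using permutes_imp_permutation[OF _ tr[OF that]] by simp
    have sr0: "sign (phi p r0) = - sign (p r0)"
      using bsP[OF that] unfolding phi_def
      by (simp add: sign_compose[OF pm1 pm2] sign_swap_id)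
    have rest: "(\<Prod>r \<in> edge_reps H i - {r0}. sign (phi p r)) = (\<Prod>r \<in> edge_reps H i - {r0}. sign (p r))"
      unfolding phi_def by (rule prod.cong) auto
    show ?thesis
      using prod.remove[OF finE r0E, of "\<lambda>r. sign (phi p r)"] prod.remove[OF finE r0E, of "\<lambda>r. sign (p r)"]
        sr0 rest by simp
  qed
  have nc: "num_curves H s i g (phi p) = num_curves H s i g p" if "p \<in> D" for p
  proof -
    define L where "L = (\<lambda>q. {((r0,j),(i r0, g r0 - 1 - q r0 j)) | j. j < g r0})"
    have M: "vertex_match H s g \<union> edge_match H i g q = Mr q \<union> L q" for q
      unfolding Mr_def L_def edge_match_split[OF r0E] by blast
    have one: "L (phi q) \<subseteq> ((Mr q \<union> L q) \<union> (Mr q \<union> L q)\<inverse>)\<^sup>*" if "q \<in> D" for q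
    proof -
      have "phi q r0 = q r0 \<circ> Transposition.transpose 0 (bs q)" unfolding phi_def by simp
      then show ?thesis unfolding L_def
        using clos_L[of r0 "bs q" "Mr q" "g r0" "i r0" "q r0"] bsP[OF that] by simp
    qed
    have two: "Mr q \<union> L (phi q) \<subseteq> ((Mr q \<union> L q) \<union> (Mr q \<union> L q)\<inverse>)\<^sup>*" if "q \<in> D" for q
      using one[OF that] by blast
    have e1: "((Mr p \<union> L (phi p)) \<union> (Mr p \<union> L (phi p))\<inverse>)\<^sup>* \<subseteq> ((Mr p \<union> L p) \<union> (Mr p \<union> L p)\<inverse>)\<^sup>*"
      by (rule rtrancl_subset_rtrancl, rule sym_sub, rule two[OF that])
    have e2: "((Mr p \<union> L p) \<union> (Mr p \<union> L p)\<inverse>)\<^sup>* \<subseteq> ((Mr p \<union> L (phi p)) \<union> (Mr p \<union> L (phi p))\<inverse>)\<^sup>*"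
    proof -
      have "Mr (phi p) \<union> L (phi (phi p)) \<subseteq> ((Mr (phi p) \<union> L (phi p)) \<union> (Mr (phi p) \<union> L (phi p))\<inverse>)\<^sup>*"
        by (rule two[OF phiD[OF that]])
      then have "Mr p \<union> L p \<subseteq> ((Mr p \<union> L (phi p)) \<union> (Mr p \<union> L (phi p))\<inverse>)\<^sup>*"
        unfolding Mr_eq phi_phi .
      then show ?thesis by (rule rtrancl_subset_rtrancl[OF sym_sub])
    qed
    have "((Mr p \<union> L (phi p)) \<union> (Mr p \<union> L (phi p))\<inverse>)\<^sup>* = ((Mr p \<union> L p) \<union> (Mr p \<union> L p)\<inverse>)\<^sup>*"
      using e1 e2 by (rule antisym)
    then show ?thesis unfolding num_curves_def Let_def M Mr_eq[of p, symmetric]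
      by (simp add: Mr_eq)
  qed
  have Fphi: "F (phi p) = - F p" if "p \<in> D" for p
    unfolding F_def using sgn[OF that] nc[OF that] by simp
  have bij: "bij_betw phi D D"
    by (rule bij_betwI[of _ _ _ phi]) (auto simp: phiD phi_phi)
  have "sum F D = sum (\<lambda>p. F (phi p)) D" using sum.reindex_bij_betw[OF bij, of F] by simp
  also have "\<dots> = sum (\<lambda>p. - F p) D" by (rule sum.cong) (auto simp: Fphi)
  also have "\<dots> = - sum F D" by (simp add: sum_negf)
  finally have "sum F D = 0" by simp
  then show ?thesis unfolding penrose_def F_def D_def .
qed

end
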